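(* Let $r \geqslant 4$, and for each $n$ let $uv \in E(K_n)$ be an edge. If $p = p(n)$ satisfies $p\, n^{1/\lambda(r)} \log n \leqslant 1/(2\mathrm{e})$, then $$\mathbb{P}\big( uv \in \langle G_{n,p}\rangle_{K_r}\big) \to 0 \quad \text{as } n \to \infty.$$
   Context: $\lambda(r) = \frac{\binom{r}{2}-2}{r-2}$ and $\mathrm{e}$ denotes Euler's number. The $K_r$-bootstrap process on $K_n$ starting from $G \subset E(K_n)$: $G_0 = G$, $G_{t+1} = G_t \cup \{f \in E(K_n) : f \text{ is the only edge of some } r\text{-clique of } K_n \text{ not in } G_t\}$; the closure is $\langle G\rangle_{K_r} = \bigcup_t G_t$. $G_{n,p}$ is the Erdős–Rényi random graph on $[n]$. *)

theory Defs
  imports Complex_Main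
begin

definition Kn_edges :: "nat \<Rightarrow> nat set set" where
  "Kn_edges n = {e. \<exists>a b. a < n \<and> b < n \<and> a \<noteq> b \<and> e = {a, b}}"

definition clique_edges :: "nat set \<Rightarrow> nat set set" where
  "clique_edges S = {e. e \<subseteq> S \<and> card e = 2}"

definition lambda_r :: "nat \<Rightarrow> real" where
  "lambda_r r = (real (r choose 2) - 2) / (real r - 2)"

definition bootstrap_step :: "nat \<Rightarrow> nat \<Rightarrow> nat set set \<Rightarrow> nat set set" where
  "bootstrap_step r n G = G \<union> {f \<in> Kn_edges n. \<exists>S. S \<subseteq> {0..<n} \<and> card S = r \<and>
       clique_edges S - G = {f}}"

definition bootstrap_closure :: "nat \<Rightarrow> nat \<Rightarrow> nat set set \<Rightarrow> nat set set" where
  "bootstrap_closure r n G = (\<Union>t. (bootstrap_step r n ^^ t) G)"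

definition Gnp_prob :: "nat \<Rightarrow> real \<Rightarrow> (nat set set \<Rightarrow> bool) \<Rightarrow> real" where
  "Gnp_prob n p P = (\<Sum>G\<in>{G. G \<subseteq> Kn_edges n \<and> P G}.
       p ^ card G * (1 - p) ^ card (Kn_edges n - G))"

end

theory Submission
  imports Defs
begin


lemma real_choose_two: "real (n choose 2) = real n * (real n - 1) / 2"
proof -
  have "even (n * (n - 1))" by auto
  then have "real (n * (n - 1) div 2) = real (n * (n - 1)) / 2"
    by (simp add: real_of_nat_div)
  moreover have "real (n * (n - 1)) = real n * (real n - 1)"
    by (cases n) (auto simp: algebra_simps)
  ultimately show ?thesis by (simp add: choose_two)
qed

lemma lam_mult: assumes "r \<ge> 3" shows "lambda_r r * (real r - 2) = real (r choose 2) - 2"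
  using assms by (simp add: lambda_r_def)

lemma lam_ge1: assumes "r \<ge> 4" shows "lambda_r r \<ge> 1"
proof -
  have "real r * (real r - 1) / 2 - 2 \<ge> real r - 2"
  proof -
    have "real r * (real r - 1) \<ge> real r * 3" using assms by (intro mult_left_mono) auto
    then show ?thesis by simp
  qed
  then show ?thesis using assms by (simp add: lambda_r_def real_choose_two field_simps)
qed

lemma lam_le: assumes "r \<ge> 4" shows "lambda_r r \<le> real (r choose 2)"
proof -
  have "real (r choose 2) - 2 \<le> real (r choose 2) * (real r - 2)"
  proof -
    have "real (r choose 2) * 1 \<le> real (r choose 2) * (real r - 2)"
      using assms by (intro mult_left_mono) auto
    then show ?thesis by simp
  qed
  then show ?thesis using assms by (simp add: lambda_r_def field_simps)
qed

lemma h_ineq: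
  assumes "r \<ge> 4" "2 \<le> t" "t \<le> r - 1"
  shows "real (t choose 2) \<le> 1 + lambda_r r * (real t - 2)"
proof -
  have r2: "real r - 2 > 0" using assms by simp
  have a: "(real r - 2) * (real r - real t) \<ge> 2 * 1"
    using assms by (intro mult_mono) auto
  have eq: "(real r - 2) * (1 + lambda_r r * (real t - 2)) - (real r - 2) * real (t choose 2)
      = (real t - 2) * ((real r - 2) * (real r - real t) - 2) / 2"
  proof -
    have "(real r - 2) * (1 + lambda_r r * (real t - 2)) = (real r - 2) + (lambda_r r * (real r - 2)) * (real t - 2)"
      by (simp add: algebra_simps)
    also have "\<dots> = (real r - 2) + (real r * (real r - 1) / 2 - 2) * (real t - 2)"
      using assms by (simp add: lam_mult real_choose_two)
    finally show ?thesis by (simp add: real_choose_two algebra_simps divide_simps)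
  qed
  have "(real t - 2) * ((real r - 2) * (real r - real t) - 2) / 2 \<ge> 0"
    using a assms by simp
  then have "(real r - 2) * real (t choose 2) \<le> (real r - 2) * (1 + lambda_r r * (real t - 2))"
    using eq by linarith
  then show ?thesis using r2 by simp
qed




definition ein :: "nat set set \<Rightarrow> nat set \<Rightarrow> nat set set" where
  "ein G W = {e\<in>G. e \<subseteq> W}"

definition dense :: "nat \<Rightarrow> nat set set \<Rightarrow> nat set \<Rightarrow> bool" where
  "dense r G W \<longleftrightarrow> lambda_r r * (real (card W) - 2) + 1 \<le> real (card (ein G W))"

lemma Kn_card2: "e \<in> Kn_edges n \<Longrightarrow> card e = 2"
  by (auto simp: Kn_edges_def)

lemma Kn_finite: "finite (Kn_edges n)"
proof -
  have "Kn_edges n \<subseteq> Pow {0..<n}" by (auto simp: Kn_edges_def)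
  then show ?thesis by (rule finite_subset) auto
qed

lemma two_sub_card:
  assumes "card e = 2" "e \<subseteq> A" "finite A" shows "2 \<le> card A"
  using card_mono[OF assms(3,2)] assms(1) by simp

lemma ein_disj:
  assumes G: "G \<subseteq> Kn_edges n" and "finite C" "finite D" "card (C \<inter> D) \<le> 1"
  shows "ein G C \<inter> ein G D = {}"
proof (rule ccontr)
  assume "ein G C \<inter> ein G D \<noteq> {}"
  then obtain e where e: "e \<in> G" "e \<subseteq> C \<inter> D" by (auto simp: ein_def)
  then have "card e = 2" using G Kn_card2 by blast
  then have "2 \<le> card (C \<inter> D)" using two_sub_card[of e "C \<inter> D"] e assms by auto
  then show False using assms by simp
qed

lemma finite_ein: "G \<subseteq> Kn_edges n \<Longrightarrow> finite (ein G W)"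
  by (rule finite_subset[OF _ Kn_finite]) (auto simp: ein_def)




lemma batch:
  fixes r n :: nat and G H \<C> :: "nat set set" and S f :: "nat set"
  assumes r4: "r \<ge> 4" and G: "G \<subseteq> Kn_edges n"
    and dn: "\<forall>C\<in>\<C>. dense r G C" and fC: "\<forall>C\<in>\<C>. finite C"
    and pw: "\<forall>C\<in>\<C>. \<forall>D\<in>\<C>. C \<noteq> D \<longrightarrow> card (C \<inter> D) \<le> 1"
    and fin: "finite \<C>"
    and cover: "\<forall>e\<in>H. \<exists>C\<in>\<C>. e \<subseteq> C"
    and fS: "finite S" and cS: "card S = r" and fS2: "f \<in> clique_edges S"
    and miss: "clique_edges S - H \<subseteq> {f}"
    and M_def: "M = {C\<in>\<C>. 2 \<le> card (C \<inter> S)}"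
  shows "lambda_r r * (real (card (S \<union> \<Union>M)) - 2) + 1
     \<le> real (card ((\<Union>C\<in>M. ein G C) \<union> {e\<in>clique_edges S \<inter> G. \<not>(\<exists>C\<in>M. e \<subseteq> C)}))"
proof -
  define P where "P = clique_edges S"
  define PC where "PC C = {e\<in>P. e \<subseteq> C}" for C
  define t where "t C = card (C \<inter> S)" for C
  define Q where "Q = P - (\<Union>C\<in>M. PC C)"
  define \<delta> :: real where "\<delta> = (if \<exists>C\<in>M. f \<subseteq> C then 0 else 1)"
  define hh where "hh C = 1 + lambda_r r * (real (t C) - 2) - real (t C choose 2)" for C
  let ?lam = "lambda_r r"
  have lam1: "?lam \<ge> 1" using lam_ge1[OF r4] .
  have MC: "M \<subseteq> \<C>" using M_def by auto
  have finM: "finite M" using fin MC finite_subset by blast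
  have fCM: "finite C" if "C \<in> M" for C using fC MC that by blast
  have tM: "2 \<le> t C" "t C \<le> r" "t C \<le> card C" if "C \<in> M" for C
  proof -
    show "2 \<le> t C" using that M_def t_def by auto
    show "t C \<le> r" unfolding t_def using cS card_mono[OF fS, of "C \<inter> S"] by simp
    show "t C \<le> card C" unfolding t_def using fCM[OF that] by (simp add: card_mono)
  qed
  have PsubPow: "P \<subseteq> Pow S" by (auto simp: P_def clique_edges_def)
  have finP: "finite P" using PsubPow fS by (meson finite_Pow_iff finite_subset)
  have P2: "card e = 2" if "e \<in> P" for e using that by (auto simp: P_def clique_edges_def)
  have cardP: "card P = r choose 2"
    using n_subsets[OF fS, of 2] cS by (simp add: P_def clique_edges_def)
  have cardPC: "card (PC C) = t C choose 2" if "C \<in> M" for C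
  proof -
    have "PC C = {B. B \<subseteq> C \<inter> S \<and> card B = 2}"
      by (auto simp: PC_def P_def clique_edges_def)
    then show ?thesis using n_subsets[of "C \<inter> S" 2] fCM[OF that] by (simp add: t_def)
  qed
  have disjPC: "PC C \<inter> PC D = {}" if "C \<in> M" "D \<in> M" "C \<noteq> D" for C D
  proof (rule ccontr)
    assume "PC C \<inter> PC D \<noteq> {}"
    then obtain e where e: "e \<in> P" "e \<subseteq> C \<inter> D" by (auto simp: PC_def)
    have "2 \<le> card (C \<inter> D)" using two_sub_card[OF P2[OF e(1)] e(2)] fCM[OF that(1)] by auto
    moreover have "C \<in> \<C>" "D \<in> \<C>" using that MC by auto
    ultimately show False using pw that(3) by fastforce
  qed
  have finPC: "finite (PC C)" for C using finP by (simp add: PC_def)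
  have UPC_sub: "(\<Union>C\<in>M. PC C) \<subseteq> P" by (auto simp: PC_def)
  have cardU: "card (\<Union>C\<in>M. PC C) = (\<Sum>C\<in>M. t C choose 2)"
  proof -
    have "card (\<Union>C\<in>M. PC C) = (\<Sum>C\<in>M. card (PC C))"
      by (rule card_UN_disjoint[OF finM]) (use finPC disjPC in auto)
    also have "\<dots> = (\<Sum>C\<in>M. t C choose 2)" by (rule sum.cong) (auto simp: cardPC)
    finally show ?thesis .
  qed
  have cardQ: "real (card Q) = real (r choose 2) - (\<Sum>C\<in>M. real (t C choose 2))"
  proof -
    have "card Q = card P - card (\<Union>C\<in>M. PC C)"
      unfolding Q_def using card_Diff_subset[OF finite_subset[OF UPC_sub finP] UPC_sub] .
    moreover have "card (\<Union>C\<in>M. PC C) \<le> card P" using card_mono[OF finP UPC_sub] .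
    ultimately show ?thesis using cardU cardP by (simp add: of_nat_diff of_nat_sum)
  qed
  have finQ: "finite Q" using finP Q_def by simp
  have QG: "Q - G \<subseteq> {f}"
  proof
    fix e assume e: "e \<in> Q - G"
    then have eP: "e \<in> P" by (simp add: Q_def)
    show "e \<in> {f}"
    proof (rule ccontr)
      assume "e \<notin> {f}"
      then have "e \<in> H" using miss eP by (auto simp: P_def)
      then obtain C where C: "C \<in> \<C>" "e \<subseteq> C" using cover by blast
      have "e \<subseteq> C \<inter> S" using C eP PsubPow by auto
      then have "2 \<le> card (C \<inter> S)" using two_sub_card[OF P2[OF eP]] fC C by auto
      then have "C \<in> M" using M_def C by auto
      then have "e \<in> (\<Union>C\<in>M. PC C)" using C eP by (auto simp: PC_def)
      then show False using e by (simp add: Q_def)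
    qed
  qed
  have QG2: "Q - G = {}" if "\<exists>C\<in>M. f \<subseteq> C"
  proof -
    from that obtain C where "C \<in> M" "f \<subseteq> C" by blast
    then have "f \<notin> Q" using fS2 by (auto simp: Q_def PC_def P_def)
    then show ?thesis using QG by auto
  qed
  have cardQG: "real (card (Q \<inter> G)) \<ge> real (card Q) - \<delta>"
  proof -
    have "card Q = card (Q \<inter> G) + card (Q - G)"
      using card_Un_disjoint[of "Q \<inter> G" "Q - G"] finQ Int_Diff_Un[of Q G] by auto
    moreover have "card (Q - G) \<le> 1" using card_mono[OF _ QG] by simp
    moreover have "card (Q - G) = 0" if "\<exists>C\<in>M. f \<subseteq> C" using QG2[OF that] by (simp only: card.empty)
    ultimately show ?thesis unfolding \<delta>_def by auto
  qed
  have setE: "{e\<in>clique_edges S \<inter> G. \<not>(\<exists>C\<in>M. e \<subseteq> C)} = Q \<inter> G"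
    by (auto simp: Q_def PC_def P_def)
  have finein: "finite (ein G C)" for C using finite_ein[OF G] .
  have disjein: "ein G C \<inter> ein G D = {}" if "C \<in> M" "D \<in> M" "C \<noteq> D" for C D
  proof -
    have "C \<in> \<C>" "D \<in> \<C>" using that MC by auto
    then have "card (C \<inter> D) \<le> 1" using pw that(3) by blast
    then show ?thesis using ein_disj[OF G fCM[OF that(1)] fCM[OF that(2)]] by blast
  qed
  have disj2: "(\<Union>C\<in>M. ein G C) \<inter> (Q \<inter> G) = {}"
    by (auto simp: Q_def PC_def ein_def)
  have cardE: "real (card ((\<Union>C\<in>M. ein G C) \<union> (Q \<inter> G)))
      = (\<Sum>C\<in>M. real (card (ein G C))) + real (card (Q \<inter> G))"
  proof -
    have "card (\<Union>C\<in>M. ein G C) = (\<Sum>C\<in>M. card (ein G C))"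
      by (rule card_UN_disjoint[OF finM]) (use finein disjein in auto)
    moreover have "finite (\<Union>C\<in>M. ein G C)" using finM finein by simp
    ultimately show ?thesis using card_Un_disjoint[OF _ _ disj2] finQ
      by (simp add: of_nat_sum)
  qed
  have cardB: "real (card (S \<union> \<Union>M)) \<le> real r + (\<Sum>C\<in>M. real (card C) - real (t C))"
  proof -
    have eq: "S \<union> \<Union>M = S \<union> (\<Union>C\<in>M. C - S)" by auto
    have "card (\<Union>C\<in>M. C - S) \<le> (\<Sum>C\<in>M. card (C - S))" using card_UN_le[OF finM] .
    also have "\<dots> = (\<Sum>C\<in>M. card C - t C)"
      by (rule sum.cong) (auto simp: t_def card_Diff_subset_Int fCM)
    finally have "card (S \<union> \<Union>M) \<le> r + (\<Sum>C\<in>M. card C - t C)"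
      using card_Un_le[of S "\<Union>C\<in>M. C - S"] arg_cong[OF eq, of card] cS by linarith
    then have "real (card (S \<union> \<Union>M)) \<le> real r + real (\<Sum>C\<in>M. card C - t C)" by linarith
    also have "real (\<Sum>C\<in>M. card C - t C) = (\<Sum>C\<in>M. real (card C) - real (t C))"
      by (simp add: of_nat_sum of_nat_diff tM)
    finally show ?thesis .
  qed
  have dsum: "(\<Sum>C\<in>M. real (card (ein G C))) \<ge> (\<Sum>C\<in>M. ?lam * (real (card C) - real (t C)) + hh C + real (t C choose 2))"
  proof (rule sum_mono)
    fix C assume "C \<in> M"
    then have "dense r G C" using dn MC by blast
    then show "?lam * (real (card C) - real (t C)) + hh C + real (t C choose 2) \<le> real (card (ein G C))"
      by (simp add: dense_def hh_def algebra_simps)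
  qed
  have hsum: "(\<Sum>C\<in>M. hh C) - \<delta> \<ge> -1"
  proof (cases "\<exists>C0\<in>M. S \<subseteq> C0")
    case True
    then obtain C0 where C0: "C0 \<in> M" "S \<subseteq> C0" by blast
    have d0: "\<delta> = 0" using C0 fS2 unfolding \<delta>_def by (auto simp: clique_edges_def)
    have tC0: "t C0 = r" using C0 cS by (simp add: t_def Int_absorb1)
    have h0: "hh C0 = -1" using tC0 lam_mult[of r] r4 by (simp add: hh_def)
    have hpos: "hh C \<ge> 0" if "C \<in> M - {C0}" for C
    proof -
      have "t C \<noteq> r"
      proof
        assume "t C = r"
        then have "C \<inter> S = S" using card_subset_eq[OF fS, of "C \<inter> S"] cS by (simp add: t_def)
        then have "S \<subseteq> C \<inter> C0" using C0 by auto
        moreover have "finite (C \<inter> C0)" using fCM that by blast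
        ultimately have "r \<le> card (C \<inter> C0)" using cS card_mono by metis
        moreover have "C \<in> \<C>" "C0 \<in> \<C>" "C \<noteq> C0" using that MC C0 by auto
        ultimately show False using pw r4 by fastforce
      qed
      then have "t C \<le> r - 1" using tM that by force
      then show ?thesis using h_ineq[OF r4 tM(1)] that by (simp add: hh_def)
    qed
    have "(\<Sum>C\<in>M. hh C) = hh C0 + (\<Sum>C\<in>M - {C0}. hh C)"
      using sum.remove[OF finM C0(1)] .
    moreover have "(\<Sum>C\<in>M - {C0}. hh C) \<ge> 0" by (rule sum_nonneg) (use hpos in blast)
    ultimately show ?thesis using h0 d0 by simp
  next
    case False
    have hpos: "hh C \<ge> 0" if "C \<in> M" for C
    proof -
      have "t C \<noteq> r"
      proof
        assume "t C = r"
        then have "C \<inter> S = S" using card_subset_eq[OF fS, of "C \<inter> S"] cS by (simp add: t_def)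
        then show False using False that by auto
      qed
      then have "t C \<le> r - 1" using tM that by force
      then show ?thesis using h_ineq[OF r4 tM(1)] that by (simp add: hh_def)
    qed
    then have "(\<Sum>C\<in>M. hh C) \<ge> 0" by (intro sum_nonneg) blast
    moreover have "\<delta> \<le> 1" by (simp add: \<delta>_def)
    ultimately show ?thesis by simp
  qed
  have lm: "?lam * (real r - 2) = real (r choose 2) - 2" using lam_mult r4 by simp
  have "?lam * (real (card (S \<union> \<Union>M)) - 2) + 1 \<le> ?lam * (real r + (\<Sum>C\<in>M. real (card C) - real (t C)) - 2) + 1"
    using cardB lam1 by (simp add: mult_left_mono)
  also have "\<dots> = real (r choose 2) - 1 + (\<Sum>C\<in>M. ?lam * (real (card C) - real (t C)))"
    using lm by (simp add: algebra_simps sum_distrib_left)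
  also have "\<dots> \<le> (\<Sum>C\<in>M. ?lam * (real (card C) - real (t C)) + hh C + real (t C choose 2)) + real (card Q) - \<delta>"
    using hsum cardQ by (simp add: sum.distrib)
  also have "\<dots> \<le> real (card ((\<Union>C\<in>M. ein G C) \<union> (Q \<inter> G)))"
    using dsum cardQG cardE by linarith
  finally show ?thesis using setE by simp
qed




definition Comp :: "nat \<Rightarrow> nat \<Rightarrow> nat set set \<Rightarrow> nat \<Rightarrow> nat set set \<Rightarrow> bool" where
  "Comp r n G L \<C> \<longleftrightarrow> finite \<C> \<and> (\<forall>C\<in>\<C>. C \<subseteq> {0..<n} \<and> 2 \<le> card C \<and> card C < L \<and> dense r G C)
     \<and> (\<forall>C\<in>\<C>. \<forall>D\<in>\<C>. C \<noteq> D \<longrightarrow> card (C \<inter> D) \<le> 1)"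

definition AL :: "nat \<Rightarrow> nat \<Rightarrow> nat set set \<Rightarrow> nat \<Rightarrow> bool" where
  "AL r n G L \<longleftrightarrow> (\<exists>W\<subseteq>{0..<n}. L \<le> card W \<and> card W \<le> ((r choose 2) + 1) * L \<and> dense r G W)"

definition Inv :: "nat \<Rightarrow> nat \<Rightarrow> nat set set \<Rightarrow> nat \<Rightarrow> nat set set \<Rightarrow> bool" where
  "Inv r n G L H \<longleftrightarrow> AL r n G L \<or> (\<exists>\<C>. Comp r n G L \<C> \<and> (\<forall>e\<in>H. \<exists>C\<in>\<C>. e \<subseteq> C))"

lemma dense_mono:
  assumes G: "G \<subseteq> Kn_edges n" and E: "E \<subseteq> ein G B" and d: "lambda_r r * (real (card B) - 2) + 1 \<le> real (card E)"
  shows "dense r G B"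
proof -
  have "card E \<le> card (ein G B)" using card_mono[OF finite_ein[OF G] E] .
  then show ?thesis using d unfolding dense_def by linarith
qed

lemma two_le_choose: assumes "r \<ge> 4" shows "2 \<le> (r choose 2) + 1"
proof -
  have "0 < r choose 2" using assms by (simp add: zero_less_binomial_iff)
  then show ?thesis by linarith
qed

lemma loop:
  assumes r4: "r \<ge> 4" and G: "G \<subseteq> Kn_edges n"
  shows "finite U \<Longrightarrow> (\<forall>C\<in>U. C \<subseteq> {0..<n} \<and> 2 \<le> card C \<and> card C < L \<and> dense r G C)
    \<Longrightarrow> (\<forall>C\<in>U. \<forall>D\<in>U. C \<noteq> D \<longrightarrow> card (C \<inter> D) \<le> 1)
    \<Longrightarrow> B \<subseteq> {0..<n} \<Longrightarrow> card B < L \<Longrightarrow> E \<subseteq> ein G B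
    \<Longrightarrow> lambda_r r * (real (card B) - 2) + 1 \<le> real (card E)
    \<Longrightarrow> (\<forall>C\<in>U. E \<inter> ein G C = {})
    \<Longrightarrow> AL r n G L \<or> (\<exists>B' U'. U' \<subseteq> U \<and> B \<subseteq> B' \<and> B' \<subseteq> {0..<n} \<and> card B' < L \<and> dense r G B'
          \<and> (\<forall>C\<in>U'. card (C \<inter> B') \<le> 1) \<and> (\<forall>C\<in>U - U'. C \<subseteq> B'))"
proof (induction U arbitrary: B E rule: finite_psubset_induct)
  case (psubset U)
  note hU = psubset.prems
  have lam1: "lambda_r r \<ge> 1" using lam_ge1[OF r4] .
  show ?case
  proof (cases "\<exists>C\<in>U. 2 \<le> card (C \<inter> B)")
    case False
    then have "\<forall>C\<in>U. card (C \<inter> B) \<le> 1" by force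
    moreover have "dense r G B" using dense_mono[OF G hU(5) hU(6)] .
    ultimately show ?thesis using hU by blast
  next
    case True
    then obtain C where C: "C \<in> U" "2 \<le> card (C \<inter> B)" by blast
    have Cp: "C \<subseteq> {0..<n}" "2 \<le> card C" "card C < L" "dense r G C" using hU(1) C by auto
    have fC: "finite C" using Cp(1) finite_subset by blast
    have fB: "finite B" using hU(3) finite_subset by blast
    define B1 where "B1 = B \<union> C"
    define E1 where "E1 = E \<union> ein G C"
    have fE: "finite E" using finite_subset[OF hU(5) finite_ein[OF G]] .
    have cE1: "card E1 = card E + card (ein G C)"
      unfolding E1_def using card_Un_disjoint[OF fE finite_ein[OF G]] hU(7) C by blast
    have cB1: "card B1 + card (B \<inter> C) = card B + card C"
      unfolding B1_def using card_Un_Int[OF fB fC] by simp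
    have "card (B \<inter> C) \<ge> 2" using C by (simp add: Int_commute)
    then have cB1': "real (card B1) \<le> real (card B) + real (card C) - 2" using cB1 by linarith
    have dC: "lambda_r r * (real (card C) - 2) + 1 \<le> real (card (ein G C))"
      using Cp(4) by (simp add: dense_def)
    have d1: "lambda_r r * (real (card B1) - 2) + 1 \<le> real (card E1)"
    proof -
      have "lambda_r r * (real (card B1) - 2) \<le> lambda_r r * (real (card B) + real (card C) - 2 - 2)"
        using cB1' lam1 by (intro mult_left_mono) auto
      then show ?thesis using dC hU(6) cE1 by (simp add: algebra_simps)
    qed
    have E1B1: "E1 \<subseteq> ein G B1" using hU(5) by (auto simp: E1_def B1_def ein_def)
    have B1n: "B1 \<subseteq> {0..<n}" using hU(3) Cp(1) by (simp add: B1_def)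
    show ?thesis
    proof (cases "L \<le> card B1")
      case True
      have "card B1 \<le> card B + card C" using cB1 by linarith
      also have "\<dots> \<le> 2 * L" using hU(4) Cp(3) by linarith
      also have "\<dots> \<le> ((r choose 2) + 1) * L"
      proof -
        have "2 \<le> (r choose 2) + 1" using two_le_choose[OF r4] .
        then show ?thesis by (intro mult_right_mono) auto
      qed
      finally have "AL r n G L" unfolding AL_def using B1n True dense_mono[OF G E1B1 d1] by blast
      then show ?thesis by blast
    next
      case False
      have sub: "U - {C} \<subset> U" using C by blast
      have disj: "\<forall>D\<in>U - {C}. E1 \<inter> ein G D = {}"
      proof
        fix D assume D: "D \<in> U - {C}"
        have fD: "finite D" using hU(1) D finite_subset by blast
        have "card (C \<inter> D) \<le> 1" using hU(2) D C by blast
        then have "ein G C \<inter> ein G D = {}" using ein_disj[OF G fC fD] by blast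
        then show "E1 \<inter> ein G D = {}" using hU(7) D by (auto simp: E1_def)
      qed
      have IH: "AL r n G L \<or> (\<exists>B' U'. U' \<subseteq> U - {C} \<and> B1 \<subseteq> B' \<and> B' \<subseteq> {0..<n} \<and> card B' < L \<and> dense r G B'
          \<and> (\<forall>C\<in>U'. card (C \<inter> B') \<le> 1) \<and> (\<forall>D\<in>(U - {C}) - U'. D \<subseteq> B'))"
        using psubset.IH[OF sub, of B1 E1] hU(1,2) B1n False E1B1 d1 disj by auto
      then show ?thesis
      proof
        assume "AL r n G L" then show ?thesis by blast
      next
        assume "\<exists>B' U'. U' \<subseteq> U - {C} \<and> B1 \<subseteq> B' \<and> B' \<subseteq> {0..<n} \<and> card B' < L \<and> dense r G B'
          \<and> (\<forall>C\<in>U'. card (C \<inter> B') \<le> 1) \<and> (\<forall>D\<in>(U - {C}) - U'. D \<subseteq> B')"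
        then obtain B' U' where R: "U' \<subseteq> U - {C}" "B1 \<subseteq> B'" "B' \<subseteq> {0..<n}" "card B' < L" "dense r G B'"
          "\<forall>C\<in>U'. card (C \<inter> B') \<le> 1" "\<forall>D\<in>(U - {C}) - U'. D \<subseteq> B'" by blast
        have "U' \<subseteq> U" using R(1) by blast
        moreover have "B \<subseteq> B'" using R(2) by (auto simp: B1_def)
        moreover have "\<forall>D\<in>U - U'. D \<subseteq> B'" using R(1,2,7) by (auto simp: B1_def)
        ultimately show ?thesis using R by blast
      qed
    qed
  qed
qed




lemma card_M_le:
  fixes S :: "nat set"
  assumes fS: "finite S" and cS: "card S = r"
    and fC: "\<forall>C\<in>\<C>. finite C"
    and pw: "\<forall>C\<in>\<C>. \<forall>D\<in>\<C>. C \<noteq> D \<longrightarrow> card (C \<inter> D) \<le> 1"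
    and M_def: "M = {C\<in>\<C>. 2 \<le> card (C \<inter> S)}"
  shows "card M \<le> r choose 2"
proof -
  have ex: "\<exists>e. e \<subseteq> C \<inter> S \<and> card e = 2" if "C \<in> M" for C
  proof -
    have "2 \<le> card (C \<inter> S)" using that M_def by simp
    then obtain T where "T \<subseteq> C \<inter> S" "card T = 2" by (rule obtain_subset_with_card_n)
    then show ?thesis by blast
  qed
  define g where "g C = (SOME e. e \<subseteq> C \<inter> S \<and> card e = 2)" for C
  have g: "g C \<subseteq> C \<inter> S \<and> card (g C) = 2" if "C \<in> M" for C
    using someI_ex[OF ex[OF that]] by (simp add: g_def)
  have inj: "inj_on g M"
  proof (rule inj_onI)
    fix C D assume CD: "C \<in> M" "D \<in> M" "g C = g D"
    show "C = D"
    proof (rule ccontr)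
      assume ne: "C \<noteq> D"
      have "g C \<subseteq> C \<inter> D" using g[OF CD(1)] g[OF CD(2)] CD(3) by auto
      moreover have "finite (C \<inter> D)" using fC CD M_def by auto
      ultimately have "card (g C) \<le> card (C \<inter> D)" by (rule card_mono[rotated])
      then have "2 \<le> card (C \<inter> D)" using g[OF CD(1)] by simp
      moreover have "C \<in> \<C>" "D \<in> \<C>" using CD M_def by auto
      then have "card (C \<inter> D) \<le> 1" using pw ne by blast
      ultimately show False by simp
    qed
  qed
  have "g ` M \<subseteq> clique_edges S" using g by (auto simp: clique_edges_def)
  moreover have "finite (clique_edges S)"
    by (rule finite_subset[of _ "Pow S"]) (auto simp: clique_edges_def fS)
  ultimately have "card (g ` M) \<le> card (clique_edges S)" by (simp add: card_mono)
  moreover have "card (clique_edges S) = r choose 2"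
    using n_subsets[OF fS, of 2] cS by (simp add: clique_edges_def)
  ultimately show ?thesis using card_image[OF inj] by simp
qed

lemma step1:
  assumes r4: "r \<ge> 4" and G: "G \<subseteq> Kn_edges n" and Lr: "L \<ge> r"
    and comp: "Comp r n G L \<C>" and cover: "\<forall>e\<in>H. \<exists>C\<in>\<C>. e \<subseteq> C"
    and Sn: "S \<subseteq> {0..<n}" and cS: "card S = r" and fS2: "f \<in> clique_edges S"
    and miss: "clique_edges S - H \<subseteq> {f}"
  shows "Inv r n G L (insert f H)"
proof -
  define M where "M = {C\<in>\<C>. 2 \<le> card (C \<inter> S)}"
  define B0 where "B0 = S \<union> \<Union>M"
  define E0 where "E0 = (\<Union>C\<in>M. ein G C) \<union> {e\<in>clique_edges S \<inter> G. \<not>(\<exists>C\<in>M. e \<subseteq> C)}"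
  have fin: "finite \<C>" and props: "\<forall>C\<in>\<C>. C \<subseteq> {0..<n} \<and> 2 \<le> card C \<and> card C < L \<and> dense r G C"
    and pw: "\<forall>C\<in>\<C>. \<forall>D\<in>\<C>. C \<noteq> D \<longrightarrow> card (C \<inter> D) \<le> 1"
    using comp by (auto simp: Comp_def)
  have fC: "\<forall>C\<in>\<C>. finite C" using props finite_subset by blast
  have fS: "finite S" using Sn finite_subset by blast
  have dn: "\<forall>C\<in>\<C>. dense r G C" using props by blast
  have d0: "lambda_r r * (real (card B0) - 2) + 1 \<le> real (card E0)"
    unfolding B0_def E0_def by (rule batch[OF r4 G dn fC pw fin cover fS cS fS2 miss M_def])
  have E0B0: "E0 \<subseteq> ein G B0" by (auto simp: E0_def B0_def ein_def clique_edges_def)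
  have MC: "M \<subseteq> \<C>" by (auto simp: M_def)
  have finM: "finite M" using fin MC finite_subset by blast
  have B0n: "B0 \<subseteq> {0..<n}" using Sn props MC by (auto simp: B0_def)
  have cM: "card M \<le> r choose 2" using card_M_le[OF fS cS fC pw M_def] .
  have cB0: "card B0 \<le> ((r choose 2) + 1) * L"
  proof -
    have "card B0 \<le> card S + card (\<Union>M)" unfolding B0_def by (rule card_Un_le)
    also have "card (\<Union>M) \<le> (\<Sum>C\<in>M. card C)" using card_Union_le_sum_card[of M] .
    also have "(\<Sum>C\<in>M. card C) \<le> card M * L"
    proof -
      have "\<And>C. C \<in> M \<Longrightarrow> card C \<le> L" using props MC by (meson less_imp_le subsetD)
      then have "(\<Sum>C\<in>M. card C) \<le> of_nat (card M) * L" by (rule sum_bounded_above)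
      then show ?thesis by simp
    qed
    also have "card M * L \<le> (r choose 2) * L" using cM by simp
    finally show ?thesis using cS Lr by simp
  qed
  show ?thesis
  proof (cases "L \<le> card B0")
    case True
    then have "AL r n G L" unfolding AL_def using B0n cB0 dense_mono[OF G E0B0 d0] by blast
    then show ?thesis by (simp add: Inv_def)
  next
    case False
    define U where "U = \<C> - M"
    have finU: "finite U" using fin by (simp add: U_def)
    have disj: "\<forall>D\<in>U. E0 \<inter> ein G D = {}"
    proof
      fix D assume D: "D \<in> U"
      have fD: "finite D" using fC D U_def by auto
      have a: "ein G C \<inter> ein G D = {}" if "C \<in> M" for C
      proof -
        have "C \<noteq> D" using that D U_def by auto
        moreover have "C \<in> \<C>" "D \<in> \<C>" using that MC D U_def by auto
        ultimately have "card (C \<inter> D) \<le> 1" using pw by blast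
        moreover have "finite C" using fC \<open>C \<in> \<C>\<close> by blast
        ultimately show ?thesis using ein_disj[OF G _ fD] by blast
      qed
      have b: False if "e \<in> clique_edges S" "e \<in> G" "e \<in> ein G D" for e
      proof -
        have "e \<subseteq> D \<inter> S" "card e = 2" using that by (auto simp: ein_def clique_edges_def)
        then have "2 \<le> card (D \<inter> S)" using two_sub_card[of e "D \<inter> S"] fD by simp
        then show False using D by (auto simp: U_def M_def)
      qed
      show "E0 \<inter> ein G D = {}" using a b unfolding E0_def by blast
    qed
    have L1: "AL r n G L \<or> (\<exists>B' U'. U' \<subseteq> U \<and> B0 \<subseteq> B' \<and> B' \<subseteq> {0..<n} \<and> card B' < L \<and> dense r G B'
          \<and> (\<forall>C\<in>U'. card (C \<inter> B') \<le> 1) \<and> (\<forall>C\<in>U - U'. C \<subseteq> B'))"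
    proof (rule loop[OF r4 G finU _ _ B0n _ E0B0 d0 disj])
      show "\<forall>C\<in>U. C \<subseteq> {0..<n} \<and> 2 \<le> card C \<and> card C < L \<and> dense r G C"
        using props unfolding U_def by blast
      show "\<forall>C\<in>U. \<forall>D\<in>U. C \<noteq> D \<longrightarrow> card (C \<inter> D) \<le> 1"
        using pw unfolding U_def by blast
      show "card B0 < L" using False by simp
    qed
    then show ?thesis
    proof
      assume "AL r n G L" then show ?thesis by (simp add: Inv_def)
    next
      assume "\<exists>B' U'. U' \<subseteq> U \<and> B0 \<subseteq> B' \<and> B' \<subseteq> {0..<n} \<and> card B' < L \<and> dense r G B'
          \<and> (\<forall>C\<in>U'. card (C \<inter> B') \<le> 1) \<and> (\<forall>C\<in>U - U'. C \<subseteq> B')"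
      then obtain B' U' where R: "U' \<subseteq> U" "B0 \<subseteq> B'" "B' \<subseteq> {0..<n}" "card B' < L" "dense r G B'"
          "\<forall>C\<in>U'. card (C \<inter> B') \<le> 1" "\<forall>C\<in>U - U'. C \<subseteq> B'" by blast
      have U'C: "U' \<subseteq> \<C>" using R(1) U_def by auto
      have SB': "S \<subseteq> B'" using R(2) B0_def by auto
      have "2 \<le> card B'"
      proof -
        have "card S \<le> card B'" using card_mono[OF finite_subset[OF R(3)] SB'] by simp
        then show ?thesis using cS r4 by simp
      qed
      then have BB: "card B' \<ge> 2" .
      have notin: "B' \<notin> U'"
      proof
        assume "B' \<in> U'"
        then have "card (B' \<inter> B') \<le> 1" using R(6) by blast
        then show False using BB by simp
      qed
      have "Comp r n G L (insert B' U')"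
        unfolding Comp_def
      proof (intro conjI)
        show "finite (insert B' U')" using finite_subset[OF U'C fin] by simp
        show "\<forall>C\<in>insert B' U'. C \<subseteq> {0..<n} \<and> 2 \<le> card C \<and> card C < L \<and> dense r G C"
          using R BB props U'C by blast
        show "\<forall>C\<in>insert B' U'. \<forall>D\<in>insert B' U'. C \<noteq> D \<longrightarrow> card (C \<inter> D) \<le> 1"
          using R(6) pw U'C by (auto simp: Int_commute)
      qed
      moreover have "\<forall>e\<in>insert f H. \<exists>C\<in>insert B' U'. e \<subseteq> C"
      proof
        fix e assume e: "e \<in> insert f H"
        show "\<exists>C\<in>insert B' U'. e \<subseteq> C"
        proof (cases "e = f")
          case True
          then show ?thesis using fS2 SB' by (auto simp: clique_edges_def)
        next
          case False
          then obtain C where C: "C \<in> \<C>" "e \<subseteq> C" using e cover by auto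
          show ?thesis
          proof (cases "C \<in> M")
            case True
            then have "C \<subseteq> B'" using R(2) B0_def by auto
            then show ?thesis using C by blast
          next
            case False
            then have "C \<in> U" using C U_def by auto
            then show ?thesis using R(7) C by (cases "C \<in> U'") auto
          qed
        qed
      qed
      ultimately show ?thesis unfolding Inv_def by blast
    qed
  qed
qed




lemma Inv_init:
  assumes r4: "r \<ge> 4" and G: "G \<subseteq> Kn_edges n" and Lr: "L \<ge> r"
  shows "Inv r n G L G"
proof -
  have "Comp r n G L G" unfolding Comp_def
  proof (intro conjI)
    show "finite G" using finite_subset[OF G Kn_finite] .
    show "\<forall>C\<in>G. C \<subseteq> {0..<n} \<and> 2 \<le> card C \<and> card C < L \<and> dense r G C"
    proof
      fix C assume C: "C \<in> G"
      then obtain a b where ab: "a < n" "b < n" "a \<noteq> b" "C = {a, b}" using G by (auto simp: Kn_edges_def)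
      have "C \<in> ein G C" using C by (simp add: ein_def)
      then have "0 < card (ein G C)" using finite_ein[OF G, of C] by (auto simp: card_gt_0_iff)
      then have "1 \<le> card (ein G C)" by simp
      then have "dense r G C" using ab by (simp add: dense_def)
      then show "C \<subseteq> {0..<n} \<and> 2 \<le> card C \<and> card C < L \<and> dense r G C" using ab Lr r4 by auto
    qed
    show "\<forall>C\<in>G. \<forall>D\<in>G. C \<noteq> D \<longrightarrow> card (C \<inter> D) \<le> 1"
    proof (intro ballI impI)
      fix C D assume CD: "C \<in> G" "D \<in> G" "C \<noteq> D"
      have c2: "card C = 2" "card D = 2" using CD G Kn_card2 by blast+
      have fC: "finite C" "finite D" using c2 by (auto intro: card_ge_0_finite)
      show "card (C \<inter> D) \<le> 1"
      proof (rule ccontr)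
        assume "\<not> card (C \<inter> D) \<le> 1"
        then have ge: "2 \<le> card (C \<inter> D)" by simp
        have "C \<inter> D = C" using card_subset_eq[OF fC(1), of "C \<inter> D"] ge c2 card_mono[OF fC(1), of "C \<inter> D"] by simp
        moreover have "C \<inter> D = D" using card_subset_eq[OF fC(2), of "C \<inter> D"] ge c2 card_mono[OF fC(2), of "C \<inter> D"] by simp
        ultimately show False using CD(3) by simp
      qed
    qed
  qed
  then show ?thesis unfolding Inv_def by blast
qed

lemma Inv_bstep:
  assumes r4: "r \<ge> 4" and G: "G \<subseteq> Kn_edges n" and Lr: "L \<ge> r" and I: "Inv r n G L H"
  shows "Inv r n G L (bootstrap_step r n H)"
proof -
  define A where "A = {f \<in> Kn_edges n. \<exists>S. S \<subseteq> {0..<n} \<and> card S = r \<and> clique_edges S - H = {f}}"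
  have finA: "finite A" using finite_subset[OF _ Kn_finite, of A] by (auto simp: A_def)
  have "Inv r n G L (H \<union> F)" if "finite F" "F \<subseteq> A" for F
    using that
  proof (induction F rule: finite_subset_induct)
    case empty
    then show ?case using I by simp
  next
    case (insert a F)
    from insert.hyps(2) obtain S where S: "S \<subseteq> {0..<n}" "card S = r" "clique_edges S - H = {a}"
      by (auto simp: A_def)
    have aS: "a \<in> clique_edges S" using S(3) by blast
    have miss: "clique_edges S - (H \<union> F) \<subseteq> {a}" using S(3) by blast
    show ?case
    proof (cases "AL r n G L")
      case True then show ?thesis by (simp add: Inv_def)
    next
      case False
      then obtain \<C> where C: "Comp r n G L \<C>" "\<forall>e\<in>H \<union> F. \<exists>C\<in>\<C>. e \<subseteq> C"
        using insert.IH unfolding Inv_def by blast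
      have "Inv r n G L (insert a (H \<union> F))" by (rule step1[OF r4 G Lr C S(1,2) aS miss])
      then show ?thesis by simp
    qed
  qed
  then have "Inv r n G L (H \<union> A)" using finA by blast
  moreover have "bootstrap_step r n H = H \<union> A" by (simp add: bootstrap_step_def A_def)
  ultimately show ?thesis by simp
qed

lemma closure_dense:
  assumes r4: "r \<ge> 4" and G: "G \<subseteq> Kn_edges n" and Lr: "L \<ge> r"
    and uv: "{u, v} \<in> bootstrap_closure r n G"
  shows "AL r n G L \<or> (\<exists>W\<subseteq>{0..<n}. u \<in> W \<and> v \<in> W \<and> card W < L \<and> dense r G W)"
proof -
  obtain t where t: "{u, v} \<in> (bootstrap_step r n ^^ t) G" using uv by (auto simp: bootstrap_closure_def)
  have "Inv r n G L ((bootstrap_step r n ^^ t) G)"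
    by (induction t) (auto intro: Inv_init[OF r4 G Lr] Inv_bstep[OF r4 G Lr])
  then show ?thesis
  proof (unfold Inv_def, elim disjE exE conjE)
    assume "AL r n G L" then show ?thesis by blast
  next
    fix \<C> assume C: "Comp r n G L \<C>" "\<forall>e\<in>(bootstrap_step r n ^^ t) G. \<exists>C\<in>\<C>. e \<subseteq> C"
    then obtain W where W: "W \<in> \<C>" "{u, v} \<subseteq> W" using t by blast
    then have "W \<subseteq> {0..<n} \<and> card W < L \<and> dense r G W" using C(1) unfolding Comp_def by blast
    then show ?thesis using W by blast
  qed
qed




lemma sum_pow_subsets:
  fixes a b :: real
  assumes "finite R"
  shows "(\<Sum>X\<in>Pow R. a ^ card X * b ^ card (R - X)) = (a + b) ^ card R"
  using assms
proof (induction R rule: finite_induct)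
  case empty
  then show ?case by simp
next
  case (insert x R)
  have fP: "finite (Pow R)" using insert.hyps by simp
  have disj: "Pow R \<inter> insert x ` Pow R = {}" using insert.hyps by auto
  have inj: "inj_on (insert x) (Pow R)"
  proof (rule inj_onI)
    fix X Y assume "X \<in> Pow R" "Y \<in> Pow R" "insert x X = insert x Y"
    moreover have "x \<notin> X" "x \<notin> Y" using calculation insert.hyps by auto
    ultimately show "X = Y" using insert_ident[of x X Y] by simp
  qed
  have s1: "(\<Sum>X\<in>Pow R. a ^ card X * b ^ card (insert x R - X)) = b * (\<Sum>X\<in>Pow R. a ^ card X * b ^ card (R - X))"
  proof -
    have eqX: "a ^ card X * b ^ card (insert x R - X) = b * (a ^ card X * b ^ card (R - X))" if "X \<in> Pow R" for X
    proof -
      have "insert x R - X = insert x (R - X)" using that insert.hyps by auto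
      then have "card (insert x R - X) = Suc (card (R - X))" using insert.hyps by simp
      then show ?thesis by simp
    qed
    have "(\<Sum>X\<in>Pow R. a ^ card X * b ^ card (insert x R - X)) = (\<Sum>X\<in>Pow R. b * (a ^ card X * b ^ card (R - X)))"
      by (rule sum.cong[OF refl eqX])
    then show ?thesis by (simp add: sum_distrib_left)
  qed
  have s2: "(\<Sum>X\<in>insert x ` Pow R. a ^ card X * b ^ card (insert x R - X)) = a * (\<Sum>X\<in>Pow R. a ^ card X * b ^ card (R - X))"
  proof -
    have "(\<Sum>X\<in>insert x ` Pow R. a ^ card X * b ^ card (insert x R - X))
       = (\<Sum>X\<in>Pow R. a ^ card (insert x X) * b ^ card (insert x R - insert x X))"
      by (rule sum.reindex[OF inj, unfolded comp_def])
    also have "\<dots> = (\<Sum>X\<in>Pow R. a * (a ^ card X * b ^ card (R - X)))"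
    proof (rule sum.cong[OF refl])
      fix X assume X: "X \<in> Pow R"
      have fX: "finite X" using X insert.hyps finite_subset by auto
      have "x \<notin> X" using X insert.hyps by auto
      then have "card (insert x X) = Suc (card X)" using fX by simp
      moreover have "insert x R - insert x X = R - X" using insert.hyps X by auto
      ultimately show "a ^ card (insert x X) * b ^ card (insert x R - insert x X) = a * (a ^ card X * b ^ card (R - X))"
        by simp
    qed
    finally show ?thesis by (simp add: sum_distrib_left)
  qed
  have "(\<Sum>X\<in>Pow (insert x R). a ^ card X * b ^ card (insert x R - X))
     = (\<Sum>X\<in>Pow R. a ^ card X * b ^ card (insert x R - X)) + (\<Sum>X\<in>insert x ` Pow R. a ^ card X * b ^ card (insert x R - X))"
    unfolding Pow_insert by (rule sum.union_disjoint) (use fP disj in auto)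
  also have "\<dots> = (a + b) * (a + b) ^ card R" unfolding s1 s2 insert.IH by (simp add: distrib_right)
  finally show ?case using insert.hyps by simp
qed

lemma contains_prob:
  fixes p :: real
  assumes K: "finite K" and F: "F \<subseteq> K"
  shows "(\<Sum>G\<in>{G. G \<subseteq> K \<and> F \<subseteq> G}. p ^ card G * (1 - p) ^ card (K - G)) = p ^ card F"
proof -
  have fF: "finite F" using finite_subset[OF F K] .
  have img: "{G. G \<subseteq> K \<and> F \<subseteq> G} = (\<lambda>X. F \<union> X) ` Pow (K - F)"
  proof
    show "{G. G \<subseteq> K \<and> F \<subseteq> G} \<subseteq> (\<lambda>X. F \<union> X) ` Pow (K - F)"
    proof
      fix G assume "G \<in> {G. G \<subseteq> K \<and> F \<subseteq> G}"
      then have "G = F \<union> (G - F)" "G - F \<in> Pow (K - F)" by auto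
      then show "G \<in> (\<lambda>X. F \<union> X) ` Pow (K - F)" by (rule image_eqI)
    qed
    show "(\<lambda>X. F \<union> X) ` Pow (K - F) \<subseteq> {G. G \<subseteq> K \<and> F \<subseteq> G}" using F by auto
  qed
  have inj: "inj_on (\<lambda>X. F \<union> X) (Pow (K - F))"
  proof (rule inj_onI)
    fix X Y assume XY: "X \<in> Pow (K - F)" "Y \<in> Pow (K - F)" "F \<union> X = F \<union> Y"
    have "X = (F \<union> X) - F" using XY(1) by auto
    also have "\<dots> = (F \<union> Y) - F" using XY(3) by simp
    also have "\<dots> = Y" using XY(2) by auto
    finally show "X = Y" .
  qed
  have "(\<Sum>G\<in>{G. G \<subseteq> K \<and> F \<subseteq> G}. p ^ card G * (1 - p) ^ card (K - G))
     = (\<Sum>X\<in>Pow (K - F). p ^ card (F \<union> X) * (1 - p) ^ card (K - (F \<union> X)))"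
    unfolding img by (rule sum.reindex[OF inj, unfolded comp_def])
  also have "\<dots> = (\<Sum>X\<in>Pow (K - F). p ^ card F * (p ^ card X * (1 - p) ^ card ((K - F) - X)))"
  proof (rule sum.cong[OF refl])
    fix X assume X: "X \<in> Pow (K - F)"
    have fX: "finite X" using X K finite_subset by auto
    have "card (F \<union> X) = card F + card X" using card_Un_disjoint[OF fF fX] X by auto
    moreover have "K - (F \<union> X) = (K - F) - X" by auto
    ultimately show "p ^ card (F \<union> X) * (1 - p) ^ card (K - (F \<union> X)) = p ^ card F * (p ^ card X * (1 - p) ^ card ((K - F) - X))"
      by (simp add: power_add)
  qed
  also have "\<dots> = p ^ card F * (p + (1 - p)) ^ card (K - F)"
    by (simp add: sum_distrib_left[symmetric] sum_pow_subsets K)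
  finally show ?thesis by simp
qed

lemma union_bound:
  fixes p :: real
  assumes p: "0 \<le> p" "p \<le> 1" and I: "finite I" and FK: "\<forall>i\<in>I. F i \<subseteq> Kn_edges n"
    and PF: "\<And>G. G \<subseteq> Kn_edges n \<Longrightarrow> P G \<Longrightarrow> \<exists>i\<in>I. F i \<subseteq> G"
  shows "Gnp_prob n p P \<le> (\<Sum>i\<in>I. p ^ card (F i))"
proof -
  define K where "K = Kn_edges n"
  define w where "w G = p ^ card G * (1 - p) ^ card (K - G)" for G
  have fK: "finite K" using Kn_finite by (simp add: K_def)
  have w0: "0 \<le> w G" for G using p by (simp add: w_def)
  have fPow: "finite (Pow K)" using fK by simp
  have "Gnp_prob n p P = (\<Sum>G\<in>{G. G \<subseteq> K \<and> P G}. w G)" by (simp add: Gnp_prob_def K_def w_def)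
  also have "\<dots> \<le> (\<Sum>G\<in>{G. G \<subseteq> K \<and> P G}. \<Sum>i\<in>I. w G * of_bool (F i \<subseteq> G))"
  proof (rule sum_mono)
    fix G assume G: "G \<in> {G. G \<subseteq> K \<and> P G}"
    then obtain i where i: "i \<in> I" "F i \<subseteq> G" using PF K_def by blast
    have "w G = w G * of_bool (F i \<subseteq> G)" using i by simp
    also have "\<dots> \<le> (\<Sum>i\<in>I. w G * of_bool (F i \<subseteq> G))"
      by (rule member_le_sum[OF i(1) _ I]) (simp add: w0)
    finally show "w G \<le> (\<Sum>i\<in>I. w G * of_bool (F i \<subseteq> G))" .
  qed
  also have "\<dots> \<le> (\<Sum>G\<in>Pow K. \<Sum>i\<in>I. w G * of_bool (F i \<subseteq> G))"
    by (rule sum_mono2[OF fPow]) (auto intro!: sum_nonneg simp: w0)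
  also have "\<dots> = (\<Sum>i\<in>I. \<Sum>G\<in>Pow K. w G * of_bool (F i \<subseteq> G))" by (rule sum.swap)
  also have "\<dots> = (\<Sum>i\<in>I. p ^ card (F i))"
  proof (rule sum.cong[OF refl])
    fix i assume i: "i \<in> I"
    have "(\<Sum>G\<in>Pow K. w G * of_bool (F i \<subseteq> G)) = (\<Sum>G\<in>Pow K. if F i \<subseteq> G then w G else 0)"
      by (rule sum.cong) auto
    also have "\<dots> = (\<Sum>G\<in>{G\<in>Pow K. F i \<subseteq> G}. w G)"
      by (rule sum.inter_filter[OF fPow, symmetric])
    also have "{G\<in>Pow K. F i \<subseteq> G} = {G. G \<subseteq> K \<and> F i \<subseteq> G}" by auto
    also have "(\<Sum>G\<in>{G. G \<subseteq> K \<and> F i \<subseteq> G}. w G) = p ^ card (F i)"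
      unfolding w_def by (rule contains_prob[OF fK]) (use FK i K_def in auto)
    finally show "(\<Sum>G\<in>Pow K. w G * of_bool (F i \<subseteq> G)) = p ^ card (F i)" .
  qed
  finally show ?thesis .
qed




lemma pow_succ_le: "(real m + 1) ^ m \<le> exp 1 * real m ^ m"
proof (cases "m = 0")
  case True then show ?thesis by simp
next
  case False
  then have mp: "real m > 0" by simp
  have "(1 + 1 / real m) ^ m \<le> exp (1 / real m) ^ m"
    by (rule power_mono) (use exp_ge_add_one_self[of "1 / real m"] mp in auto)
  also have "\<dots> = exp 1" using mp by (simp add: exp_of_nat_mult[symmetric])
  finally have a: "(1 + 1 / real m) ^ m \<le> exp 1" .
  have "(real m + 1) ^ m = real m ^ m * (1 + 1 / real m) ^ m"
    using mp by (simp add: power_mult_distrib[symmetric] field_simps)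
  also have "\<dots> \<le> real m ^ m * exp 1" using a by (intro mult_left_mono) auto
  finally show ?thesis by (simp add: mult.commute)
qed

lemma fact_lower: "(real m / exp 1) ^ m \<le> fact m"
proof (induction m)
  case 0 then show ?case by simp
next
  case (Suc m)
  have "(real (Suc m) / exp 1) ^ Suc m = (real m + 1) * (real m + 1) ^ m / exp 1 ^ Suc m"
    by (simp add: power_divide add.commute)
  also have "\<dots> \<le> (real m + 1) * (exp 1 * real m ^ m) / exp 1 ^ Suc m"
    by (intro divide_right_mono mult_left_mono pow_succ_le) auto
  also have "\<dots> = (real m + 1) * (real m / exp 1) ^ m"
    by (simp add: power_divide)
  also have "\<dots> \<le> (real m + 1) * fact m" using Suc.IH by (intro mult_left_mono) auto
  also have "\<dots> = fact (Suc m)" by (simp add: algebra_simps)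
  finally show ?case .
qed

lemma binom_fact_le: "(N choose m) * fact m \<le> N ^ m"
proof (cases "m \<le> N")
  case True
  have "fact m * fact (N - m) * (N choose m) = fact N" using binomial_fact_lemma[OF True] .
  then have "fact N = ((N choose m) * fact m) * fact (N - m)" by (simp add: ac_simps)
  then have "(N choose m) * fact m = fact N div fact (N - m)" by simp
  also have "\<dots> \<le> N ^ m" using fact_div_fact_le_pow[OF True] .
  finally show ?thesis .
next
  case False then show ?thesis by (simp add: binomial_eq_0)
qed

lemma binom_upper:
  assumes "m \<ge> 1"
  shows "real (N choose m) \<le> (exp 1 * real N / real m) ^ m"
proof -
  have mp: "real m > 0" using assms by simp
  have "real ((N choose m) * fact m) \<le> real (N ^ m)"
    using binom_fact_le[of N m] by (simp only: of_nat_le_iff)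
  then have "real (N choose m) * fact m \<le> real N ^ m" by simp
  then have "real (N choose m) \<le> real N ^ m / fact m" by (simp add: field_simps)
  also have "\<dots> \<le> real N ^ m / (real m / exp 1) ^ m"
    by (rule divide_left_mono[OF fact_lower]) (use mp in auto)
  also have "\<dots> = (exp 1 * real N / real m) ^ m" by (simp add: power_divide field_simps)
  finally show ?thesis .
qed

lemma binom_upper2: "real (n choose k) \<le> (exp 1 * real n / real k) ^ k"
proof (cases "k = 0")
  case True then show ?thesis by simp
next
  case False then show ?thesis using binom_upper[of k n] by simp
qed




lemma choose2_le:
  assumes lam1: "lam \<ge> 1" and k2: "k \<ge> 2" and hm: "real m \<ge> lam * (real k - 2) + 1"
  shows "real (k choose 2) \<le> real k * real m"
proof -
  have "lam * (real k - 2) \<ge> 1 * (real k - 2)" using lam1 k2 by (intro mult_right_mono) auto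
  then have "real m \<ge> real k - 1" using hm by simp
  then have "real k * (real k - 1) \<le> real k * real m" by (intro mult_left_mono) auto
  moreover have "real k * (real k - 1) \<ge> 0" using k2 by simp
  ultimately show ?thesis by (simp add: real_choose_two)
qed

lemma binom_p_bound:
  assumes lam1: "lam \<ge> 1" and n1: "real n \<ge> 1" and k2: "k \<ge> 2" and m1: "m \<ge> 1"
    and hm: "real m \<ge> lam * (real k - 2) + 1"
    and p0: "0 \<le> p" and hp: "p \<le> \<delta> * real n powr (-1 / lam)" and d0: "0 \<le> \<delta>"
  shows "real ((k choose 2) choose m) * p ^ m \<le> (exp 1 * real k * \<delta>) ^ m * real n powr (- real m / lam)"
proof -
  have npos: "real n > 0" using n1 by simp
  have "real ((k choose 2) choose m) \<le> (exp 1 * real (k choose 2) / real m) ^ m" by (rule binom_upper[OF m1])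
  also have "\<dots> \<le> (exp 1 * real k) ^ m"
  proof (rule power_mono)
    have "real (k choose 2) / real m \<le> real k"
      using choose2_le[OF lam1 k2 hm] m1 by (simp add: divide_le_eq)
    then show "exp 1 * real (k choose 2) / real m \<le> exp 1 * real k"
      by (simp add: mult_left_mono times_divide_eq_right[symmetric] del: times_divide_eq_right)
    show "0 \<le> exp 1 * real (k choose 2) / real m" by simp
  qed
  finally have b: "real ((k choose 2) choose m) \<le> (exp 1 * real k) ^ m" .
  have "p ^ m \<le> (\<delta> * real n powr (-1 / lam)) ^ m" by (rule power_mono[OF hp p0])
  also have "\<dots> = \<delta> ^ m * real n powr (- real m / lam)"
    using npos by (simp add: power_mult_distrib powr_power)
  finally have c: "p ^ m \<le> \<delta> ^ m * real n powr (- real m / lam)" .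
  have "real ((k choose 2) choose m) * p ^ m \<le> (exp 1 * real k) ^ m * (\<delta> ^ m * real n powr (- real m / lam))"
    by (rule mult_mono[OF b c]) (use p0 in auto)
  also have "\<dots> = (exp 1 * real k * \<delta>) ^ m * real n powr (- real m / lam)"
    by (simp add: power_mult_distrib)
  finally show ?thesis .
qed

lemma small_term:
  assumes lam1: "lam \<ge> 1" and n1: "real n \<ge> 1" and k2: "k \<ge> 2" and m1: "m \<ge> 1"
    and hm: "real m \<ge> lam * (real k - 2) + 1"
    and p0: "0 \<le> p" and hp: "p \<le> \<delta> * real n powr (-1 / lam)" and d0: "0 \<le> \<delta>"
    and hk: "exp 1 * real k * \<delta> \<le> 1"
  shows "real n ^ (k - 2) * real ((k choose 2) choose m) * p ^ m \<le> real n powr (-1 / lam)"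
proof -
  have npos: "real n > 0" using n1 by simp
  have "real n ^ (k - 2) * (real ((k choose 2) choose m) * p ^ m)
      \<le> real n ^ (k - 2) * ((exp 1 * real k * \<delta>) ^ m * real n powr (- real m / lam))"
    by (rule mult_left_mono[OF binom_p_bound[OF lam1 n1 k2 m1 hm p0 hp d0]]) simp
  also have "\<dots> \<le> real n ^ (k - 2) * (1 * real n powr (- real m / lam))"
    by (intro mult_left_mono mult_right_mono power_le_one) (use hk d0 in auto)
  also have "\<dots> = real n powr (real (k - 2) - real m / lam)"
    using npos by (simp add: powr_diff powr_realpow powr_minus divide_inverse)
  also have "\<dots> \<le> real n powr (-1 / lam)"
  proof (rule powr_mono[OF _ n1])
    have "real m / lam \<ge> (lam * (real k - 2) + 1) / lam" using hm lam1 by (intro divide_right_mono) auto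
    also have "(lam * (real k - 2) + 1) / lam = real k - 2 + 1 / lam" using lam1 by (simp add: field_simps)
    finally show "real (k - 2) - real m / lam \<le> -1 / lam" using k2 by (simp add: of_nat_diff)
  qed
  finally show ?thesis by (simp add: mult.assoc)
qed

lemma large_term:
  assumes lam1: "lam \<ge> 1" and n2: "real n \<ge> 2" and k3: "k \<ge> 3" and m1: "m \<ge> 1"
    and hm: "real m \<ge> lam * (real k - 2) + 1" and hm2: "m \<le> \<Lambda> * k"
    and p0: "0 \<le> p" and hp: "p \<le> \<delta> * real n powr (-1 / lam)" and d0: "0 \<le> \<delta>"
    and hK: "exp 1 * real k * \<delta> \<le> K" and K1: "K \<ge> 1"
    and kln: "ln (real n) \<le> real k" and lnpos: "ln (real n) > 0"
    and small: "exp 1 * K ^ \<Lambda> / ln (real n) \<le> exp (-3)"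
  shows "real (n choose k) * real ((k choose 2) choose m) * p ^ m \<le> 1 / real n"
proof -
  have npos: "real n > 0" using n2 by simp
  have n1: "real n \<ge> 1" using n2 by simp
  have kpos: "real k > 0" using k3 by simp
  have A: "real (n choose k) \<le> (exp 1 / real k) ^ k * real n ^ k"
  proof -
    have "exp 1 * real n / real k = (exp 1 / real k) * real n" by simp
    then have "(exp 1 * real n / real k) ^ k = (exp 1 / real k) ^ k * real n ^ k"
      by (simp only: power_mult_distrib)
    then show ?thesis using binom_upper2[of n k] by simp
  qed
  have B: "real ((k choose 2) choose m) * p ^ m \<le> (K ^ \<Lambda>) ^ k * real n powr (- real m / lam)"
  proof -
    have "real ((k choose 2) choose m) * p ^ m \<le> (exp 1 * real k * \<delta>) ^ m * real n powr (- real m / lam)"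
      by (rule binom_p_bound[OF lam1 n1 _ m1 hm p0 hp d0]) (use k3 in simp)
    also have "\<dots> \<le> K ^ m * real n powr (- real m / lam)"
      by (intro mult_right_mono power_mono) (use hK d0 in auto)
    also have "\<dots> \<le> K ^ (\<Lambda> * k) * real n powr (- real m / lam)"
      by (intro mult_right_mono power_increasing hm2 K1) auto
    finally show ?thesis by (simp add: power_mult)
  qed
  have C: "real n ^ k * real n powr (- real m / lam) \<le> real n ^ 2"
  proof -
    have "real n ^ k * real n powr (- real m / lam) = real n powr (real k - real m / lam)"
      using npos by (simp add: powr_diff powr_realpow powr_minus divide_inverse)
    also have "\<dots> \<le> real n powr 2"
    proof (rule powr_mono[OF _ n1])
      have "real m / lam \<ge> (lam * (real k - 2)) / lam" using hm lam1 by (intro divide_right_mono) auto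
      also have "(lam * (real k - 2)) / lam = real k - 2" using lam1 by simp
      finally show "real k - real m / lam \<le> 2" by simp
    qed
    also have "\<dots> = real n ^ 2" using npos by simp
    finally show ?thesis .
  qed
  have D: "exp 1 * K ^ \<Lambda> / real k \<le> exp (-3)"
  proof -
    have "exp 1 * K ^ \<Lambda> / real k \<le> exp 1 * K ^ \<Lambda> / ln (real n)"
      by (rule divide_left_mono[OF kln]) (use lnpos K1 kpos in auto)
    then show ?thesis using small by simp
  qed
  have E: "(exp 1 * K ^ \<Lambda> / real k) ^ k \<le> 1 / real n ^ 3"
  proof -
    have "(exp 1 * K ^ \<Lambda> / real k) ^ k \<le> exp (-3) ^ k"
      by (rule power_mono[OF D]) (use K1 kpos in simp)
    also have "\<dots> = exp (- 3 * real k)" by (simp add: exp_of_nat_mult[symmetric] mult.commute)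
    also have "\<dots> \<le> exp (- 3 * ln (real n))" using kln by simp
    also have "\<dots> = 1 / real n ^ 3"
    proof -
      have "exp (3 * ln (real n)) = exp (ln (real n)) ^ 3" using exp_of_nat_mult[of 3 "ln (real n)"] by simp
      also have "\<dots> = real n ^ 3" using npos by simp
      finally have "exp (3 * ln (real n)) = real n ^ 3" .
      then show ?thesis using exp_minus[of "3 * ln (real n)"] by (simp add: divide_inverse)
    qed
    finally show ?thesis .
  qed
  have "real (n choose k) * real ((k choose 2) choose m) * p ^ m
     = real (n choose k) * (real ((k choose 2) choose m) * p ^ m)" by (simp add: mult.assoc)
  also have "\<dots> \<le> ((exp 1 / real k) ^ k * real n ^ k) * ((K ^ \<Lambda>) ^ k * real n powr (- real m / lam))"
    by (rule mult_mono[OF A B]) (use p0 in auto)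
  also have "\<dots> = (exp 1 * K ^ \<Lambda> / real k) ^ k * (real n ^ k * real n powr (- real m / lam))"
  proof -
    have "exp 1 * K ^ \<Lambda> / real k = (exp 1 / real k) * K ^ \<Lambda>" by simp
    then have "(exp 1 * K ^ \<Lambda> / real k) ^ k = (exp 1 / real k) ^ k * (K ^ \<Lambda>) ^ k"
      by (simp only: power_mult_distrib)
    then show ?thesis by (simp only: mult_ac)
  qed
  also have "\<dots> \<le> (1 / real n ^ 3) * real n ^ 2"
    by (rule mult_mono[OF E C]) (use K1 kpos in auto)
  also have "\<dots> = 1 / real n" using npos by (simp add: power3_eq_cube power2_eq_square)
  finally show ?thesis .
qed




lemma dense_sub:
  assumes G: "G \<subseteq> Kn_edges n" and d: "dense r G W"
  shows "\<exists>F. F \<subseteq> clique_edges W \<and> card F = nat \<lceil>lambda_r r * (real (card W) - 2) + 1\<rceil> \<and> F \<subseteq> G"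
proof -
  have sub: "ein G W \<subseteq> clique_edges W" using G Kn_card2 by (auto simp: ein_def clique_edges_def)
  have "lambda_r r * (real (card W) - 2) + 1 \<le> real (card (ein G W))" using d by (simp add: dense_def)
  then have "\<lceil>lambda_r r * (real (card W) - 2) + 1\<rceil> \<le> int (card (ein G W))"
    unfolding ceiling_le_iff by simp
  then have "nat \<lceil>lambda_r r * (real (card W) - 2) + 1\<rceil> \<le> card (ein G W)" by linarith
  then obtain F where F: "F \<subseteq> ein G W" "card F = nat \<lceil>lambda_r r * (real (card W) - 2) + 1\<rceil>"
    by (rule obtain_subset_with_card_n)
  moreover have "F \<subseteq> G" using F(1) by (auto simp: ein_def)
  ultimately show ?thesis using sub by blast
qed

lemma binom_le_pow_any: "n choose k \<le> n ^ k"
  by (cases "k \<le> n") (auto simp: binomial_le_pow binomial_eq_0)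

lemma card_W1:
  assumes uv: "u < n" "v < n" "u \<noteq> v" and k2: "k \<ge> 2"
  shows "card {W. W \<subseteq> {0..<n} \<and> u \<in> W \<and> v \<in> W \<and> card W = k} \<le> n ^ (k - 2)"
proof -
  define X where "X = {X. X \<subseteq> {0..<n} - {u, v} \<and> card X = k - 2}"
  have sub: "{W. W \<subseteq> {0..<n} \<and> u \<in> W \<and> v \<in> W \<and> card W = k} \<subseteq> (\<lambda>Y. Y \<union> {u, v}) ` X"
  proof
    fix W assume W: "W \<in> {W. W \<subseteq> {0..<n} \<and> u \<in> W \<and> v \<in> W \<and> card W = k}"
    have fW: "finite W" using W finite_subset by blast
    have "card (W - {u, v}) = card W - card {u, v}"
      by (rule card_Diff_subset) (use W in auto)
    then have "card (W - {u, v}) = k - 2" using W uv by simp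
    then have "W - {u, v} \<in> X" using W by (auto simp: X_def)
    moreover have "W = (W - {u, v}) \<union> {u, v}" using W by auto
    ultimately show "W \<in> (\<lambda>Y. Y \<union> {u, v}) ` X" by blast
  qed
  have fX: "finite X" by (simp add: X_def)
  have "card {W. W \<subseteq> {0..<n} \<and> u \<in> W \<and> v \<in> W \<and> card W = k} \<le> card ((\<lambda>Y. Y \<union> {u, v}) ` X)"
    by (rule card_mono[OF finite_imageI[OF fX] sub])
  also have "\<dots> \<le> card X" by (rule card_image_le[OF fX])
  also have "card X = (n - 2) choose (k - 2)"
  proof -
    have "card ({0..<n} - {u, v}) = n - 2" using uv by simp
    then show ?thesis using n_subsets[of "{0..<n} - {u, v}" "k - 2"] by (simp add: X_def)
  qed
  also have "\<dots> \<le> (n - 2) ^ (k - 2)" by (rule binom_le_pow_any)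
  also have "\<dots> \<le> n ^ (k - 2)" by (rule power_mono) auto
  finally show ?thesis .
qed

lemma card_FF:
  assumes "finite W" "card W = k"
  shows "card {F. F \<subseteq> clique_edges W \<and> card F = m} = (k choose 2) choose m"
proof -
  have fc: "finite (clique_edges W)"
    by (rule finite_subset[of _ "Pow W"]) (auto simp: clique_edges_def assms(1))
  have "card (clique_edges W) = k choose 2"
    using n_subsets[OF assms(1), of 2] assms(2) by (simp add: clique_edges_def)
  then show ?thesis using n_subsets[OF fc, of m] by simp
qed




lemma sum_SS:
  assumes "finite A" "\<forall>k\<in>A. finite (B k)" "\<forall>k\<in>A. \<forall>W\<in>B k. finite (C W k)"
  shows "(\<Sum>i\<in>(SIGMA k:A. SIGMA W:B k. C W k). f (snd (snd i))) = (\<Sum>k\<in>A. \<Sum>W\<in>B k. \<Sum>F\<in>C W k. f F)"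
proof -
  have "(\<Sum>k\<in>A. \<Sum>W\<in>B k. \<Sum>F\<in>C W k. f F) = (\<Sum>k\<in>A. \<Sum>z\<in>(SIGMA W:B k. C W k). f (snd z))"
  proof (rule sum.cong[OF refl])
    fix k assume k: "k \<in> A"
    show "(\<Sum>W\<in>B k. \<Sum>F\<in>C W k. f F) = (\<Sum>z\<in>(SIGMA W:B k. C W k). f (snd z))"
      using sum.Sigma[of "B k" "\<lambda>W. C W k" "\<lambda>W F. f F"] assms k by (simp add: split_def)
  qed
  also have "\<dots> = (\<Sum>i\<in>(SIGMA k:A. SIGMA W:B k. C W k). f (snd (snd i)))"
    using sum.Sigma[of A "\<lambda>k. SIGMA W:B k. C W k" "\<lambda>k z. f (snd z)"] assms by (simp add: split_def)
  finally show ?thesis by simp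
qed

lemma nat_ceil_facts:
  assumes "x \<ge> 0"
  shows "x \<le> real (nat \<lceil>x\<rceil>)" "real (nat \<lceil>x\<rceil>) \<le> x + 1"
proof -
  have "real (nat \<lceil>x\<rceil>) = real_of_int \<lceil>x\<rceil>" using assms by simp
  then show "x \<le> real (nat \<lceil>x\<rceil>)" "real (nat \<lceil>x\<rceil>) \<le> x + 1"
    by (simp_all add: le_of_int_ceiling)
qed

lemma bound_n:
  fixes r n u v :: nat and p :: real
  assumes r4: "r \<ge> 4" and n3: "n \<ge> 3" and lnr: "ln (real n) \<ge> real r"
    and small: "exp 1 * real ((r choose 2) + 1) ^ (r choose 2) / ln (real n) \<le> exp (-3)"
    and uv: "u < n" "v < n" "u \<noteq> v" and p0: "0 \<le> p" and p1: "p \<le> 1"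
    and hp: "p * real n powr (1 / lambda_r r) * ln (real n) \<le> 1 / (2 * exp 1)"
  shows "Gnp_prob n p (\<lambda>G. {u, v} \<in> bootstrap_closure r n G)
     \<le> 2 * ln (real n) * real n powr (-1 / lambda_r r) + (2 * real ((r choose 2) + 1) * ln (real n) + 1) / real n"
proof -
  define lam where "lam = lambda_r r"
  define \<Lambda> where "\<Lambda> = r choose 2"
  define K where "K = \<Lambda> + 1"
  define L where "L = nat \<lceil>ln (real n)\<rceil>"
  define \<delta> where "\<delta> = 1 / (2 * exp 1 * ln (real n))"
  define mm where "mm k = nat \<lceil>lam * (real k - 2) + 1\<rceil>" for k :: nat
  define W1 where "W1 k = {W. W \<subseteq> {0..<n} \<and> u \<in> W \<and> v \<in> W \<and> card W = k}" for k
  define W2 where "W2 k = {W. W \<subseteq> {0..<n} \<and> card W = k}" for k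
  define FF where "FF W k = {F. F \<subseteq> clique_edges W \<and> card F = mm k}" for W k
  define I1 where "I1 = (SIGMA k:{2..L}. SIGMA W:W1 k. FF W k)"
  define I2 where "I2 = (SIGMA k:{L..K*L}. SIGMA W:W2 k. FF W k)"
  define g where "g F = p ^ card F" for F :: "nat set set"
  have lam1: "lam \<ge> 1" using lam_ge1[OF r4] by (simp add: lam_def)
  have lamL: "lam \<le> real \<Lambda>" using lam_le[OF r4] by (simp add: lam_def \<Lambda>_def)
  have ln4: "ln (real n) \<ge> 4" using lnr r4 by linarith
  have nR: "real n \<ge> 3" using n3 by simp
  have npos: "real n > 0" using nR by simp
  have L_ge: "ln (real n) \<le> real L" using nat_ceil_facts(1)[of "ln (real n)"] ln4 unfolding L_def by linarith
  have L_le: "real L \<le> 2 * ln (real n)" using nat_ceil_facts(2)[of "ln (real n)"] ln4 unfolding L_def by linarith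
  have Lr: "L \<ge> r" using L_ge lnr by linarith
  have d0: "\<delta> \<ge> 0" using ln4 by (simp add: \<delta>_def)
  have hp': "p \<le> \<delta> * real n powr (-1 / lam)"
  proof -
    have pos: "real n powr (1 / lam) * ln (real n) > 0" using npos ln4 n3 by (intro mult_pos_pos) auto
    have "p \<le> (1 / (2 * exp 1)) / (real n powr (1 / lam) * ln (real n))"
    proof -
      have "p * (real n powr (1 / lam) * ln (real n)) \<le> 1 / (2 * exp 1)" using hp by (simp add: lam_def mult.assoc)
      then show ?thesis by (subst pos_le_divide_eq[OF pos])
    qed
    also have "\<dots> = \<delta> * real n powr (-1 / lam)"
    proof -
      have gen: "\<And>X l::real. X > 0 \<Longrightarrow> l > 0 \<Longrightarrow> (1 / (2 * exp 1)) / (X * l) = (1 / (2 * exp 1 * l)) * inverse X"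
        by (simp add: field_simps)
      have e1: "-1 / lam = - (1 / lam)" by simp
      have "real n powr (-1 / lam) = inverse (real n powr (1 / lam))" unfolding e1 by (rule powr_minus)
      then show ?thesis unfolding \<delta>_def using gen[of "real n powr (1 / lam)" "ln (real n)"] npos ln4 n3 by simp
    qed
    finally show ?thesis .
  qed
  have mm1: "mm k \<ge> 1" "real (mm k) \<ge> lam * (real k - 2) + 1" "real (mm k) \<le> lam * (real k - 2) + 2"
    if "k \<ge> 2" for k
  proof -
    have x0: "lam * (real k - 2) + 1 \<ge> 1" using lam1 that by simp
    show "real (mm k) \<ge> lam * (real k - 2) + 1" using nat_ceil_facts(1) x0 by (simp add: mm_def)
    then show "mm k \<ge> 1" using x0 by linarith
    show "real (mm k) \<le> lam * (real k - 2) + 2" using nat_ceil_facts(2)[of "lam * (real k - 2) + 1"] x0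
      by (simp add: mm_def)
  qed
  have cliq_sub: "clique_edges W \<subseteq> Kn_edges n" if "W \<subseteq> {0..<n}" for W
  proof
    fix e assume e: "e \<in> clique_edges W"
    then have "card e = 2" "e \<subseteq> W" by (auto simp: clique_edges_def)
    then obtain a b where "e = {a, b}" "a \<noteq> b" by (auto simp: card_2_iff)
    moreover have "a < n" "b < n" using calculation \<open>e \<subseteq> W\<close> that by auto
    ultimately show "e \<in> Kn_edges n" unfolding Kn_edges_def by blast
  qed
  have finW1: "finite (W1 k)" for k by (rule finite_subset[of _ "Pow {0..<n}"]) (auto simp: W1_def)
  have finW2: "finite (W2 k)" for k by (rule finite_subset[of _ "Pow {0..<n}"]) (auto simp: W2_def)
  have finFF: "finite (FF W k)" if "W \<subseteq> {0..<n}" for W k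
  proof -
    have "FF W k \<subseteq> Pow (Kn_edges n)" using cliq_sub[OF that] by (auto simp: FF_def)
    moreover have "finite (Pow (Kn_edges n))" using Kn_finite by simp
    ultimately show ?thesis by (rule finite_subset)
  qed
  have finI1: "finite I1" unfolding I1_def
    by (intro finite_SigmaI finW1 finFF) (auto simp: W1_def)
  have finI2: "finite I2" unfolding I2_def
    by (intro finite_SigmaI finW2 finFF) (auto simp: W2_def)
  have FK: "\<forall>i\<in>I1 \<union> I2. snd (snd i) \<subseteq> Kn_edges n"
  proof
    fix i assume "i \<in> I1 \<union> I2"
    then have "fst (snd i) \<subseteq> {0..<n} \<and> snd (snd i) \<subseteq> clique_edges (fst (snd i))"
      by (auto simp: I1_def I2_def W1_def W2_def FF_def)
    then show "snd (snd i) \<subseteq> Kn_edges n" using cliq_sub by blast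
  qed
  have ev: "\<exists>i\<in>I1 \<union> I2. snd (snd i) \<subseteq> G"
    if G: "G \<subseteq> Kn_edges n" and P: "{u, v} \<in> bootstrap_closure r n G" for G
  proof -
    from closure_dense[OF r4 G Lr P]
    show ?thesis
    proof (elim disjE exE conjE)
      assume "AL r n G L"
      then obtain W where W: "W \<subseteq> {0..<n}" "L \<le> card W" "card W \<le> ((r choose 2) + 1) * L" "dense r G W"
        unfolding AL_def by blast
      obtain F where F: "F \<subseteq> clique_edges W" "card F = mm (card W)" "F \<subseteq> G"
        using dense_sub[OF G W(4)] by (auto simp: mm_def lam_def)
      have "(card W, W, F) \<in> I2" using W F by (simp add: I2_def W2_def FF_def K_def \<Lambda>_def)
      then show ?thesis using F by force
    next
      fix W assume W: "W \<subseteq> {0..<n}" "u \<in> W" "v \<in> W" "card W < L" "dense r G W"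
      obtain F where F: "F \<subseteq> clique_edges W" "card F = mm (card W)" "F \<subseteq> G"
        using dense_sub[OF G W(5)] by (auto simp: mm_def lam_def)
      have fW: "finite W" using W(1) finite_subset by blast
      have "card {u, v} \<le> card W" by (rule card_mono[OF fW]) (use W in auto)
      then have "2 \<le> card W" using uv by simp
      then have "(card W, W, F) \<in> I1" using W F by (simp add: I1_def W1_def FF_def)
      then show ?thesis using F by force
    qed
  qed
  have "Gnp_prob n p (\<lambda>G. {u, v} \<in> bootstrap_closure r n G) \<le> (\<Sum>i\<in>I1 \<union> I2. p ^ card (snd (snd i)))"
    by (rule union_bound[OF p0 p1 _ FK ev]) (use finI1 finI2 in auto)
  also have "\<dots> \<le> (\<Sum>i\<in>I1. p ^ card (snd (snd i))) + (\<Sum>i\<in>I2. p ^ card (snd (snd i)))"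
  proof -
    have "(\<Sum>i\<in>I1 \<union> I2. p ^ card (snd (snd i))) + (\<Sum>i\<in>I1 \<inter> I2. p ^ card (snd (snd i)))
       = (\<Sum>i\<in>I1. p ^ card (snd (snd i))) + (\<Sum>i\<in>I2. p ^ card (snd (snd i)))"
      by (rule sum.union_inter[OF finI1 finI2])
    moreover have "(\<Sum>i\<in>I1 \<inter> I2. p ^ card (snd (snd i))) \<ge> 0" using p0 by (simp add: sum_nonneg)
    ultimately show ?thesis by linarith
  qed
  also have "(\<Sum>i\<in>I1. p ^ card (snd (snd i))) \<le> 2 * ln (real n) * real n powr (-1 / lam)"
  proof -
    have "(\<Sum>i\<in>I1. p ^ card (snd (snd i))) = (\<Sum>k\<in>{2..L}. \<Sum>W\<in>W1 k. \<Sum>F\<in>FF W k. p ^ card F)"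
      unfolding I1_def by (rule sum_SS) (auto simp: finW1 finFF W1_def)
    also have "\<dots> \<le> (\<Sum>k\<in>{2..L}. real n powr (-1 / lam))"
    proof (rule sum_mono)
      fix k assume k: "k \<in> {2..L}"
      have k2: "k \<ge> 2" using k by simp
      have inner: "(\<Sum>F\<in>FF W k. p ^ card F) = real ((k choose 2) choose mm k) * p ^ mm k" if "W \<in> W1 k" for W
      proof -
        have fW: "finite W" using that finite_subset by (auto simp: W1_def)
        have "(\<Sum>F\<in>FF W k. p ^ card F) = (\<Sum>F\<in>FF W k. p ^ mm k)" by (rule sum.cong) (auto simp: FF_def)
        also have "\<dots> = real (card (FF W k)) * p ^ mm k" by simp
        also have "card (FF W k) = (k choose 2) choose mm k"
          unfolding FF_def by (rule card_FF[OF fW]) (use that in \<open>simp add: W1_def\<close>)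
        finally show ?thesis .
      qed
      have "(\<Sum>W\<in>W1 k. \<Sum>F\<in>FF W k. p ^ card F) = real (card (W1 k)) * (real ((k choose 2) choose mm k) * p ^ mm k)"
        using inner by simp
      also have "\<dots> \<le> real n ^ (k - 2) * (real ((k choose 2) choose mm k) * p ^ mm k)"
      proof (rule mult_right_mono)
        have "card (W1 k) \<le> n ^ (k - 2)" unfolding W1_def by (rule card_W1[OF uv k2])
        then show "real (card (W1 k)) \<le> real n ^ (k - 2)" by (metis of_nat_le_iff of_nat_power)
        show "0 \<le> real ((k choose 2) choose mm k) * p ^ mm k" using p0 by simp
      qed
      also have "\<dots> \<le> real n powr (-1 / lam)"
      proof -
        have hk: "exp 1 * real k * \<delta> \<le> 1"
        proof -
          have "real k \<le> 2 * ln (real n)" using k L_le by simp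
          then have "exp 1 * real k * \<delta> \<le> exp 1 * (2 * ln (real n)) * \<delta>"
            using d0 by (intro mult_right_mono mult_left_mono) auto
          also have "\<dots> = 1" using ln4 by (simp add: \<delta>_def)
          finally show ?thesis .
        qed
        show ?thesis using small_term[OF lam1 _ k2 mm1(1)[OF k2] mm1(2)[OF k2] p0 hp' d0 hk] nR
          by (simp add: mult.assoc)
      qed
      finally show "(\<Sum>W\<in>W1 k. \<Sum>F\<in>FF W k. p ^ card F) \<le> real n powr (-1 / lam)" .
    qed
    also have "\<dots> = real (card {2..L}) * real n powr (-1 / lam)" by simp
    also have "\<dots> \<le> 2 * ln (real n) * real n powr (-1 / lam)"
    proof (rule mult_right_mono)
      have "real (card {2..L}) \<le> real L" by simp
      then show "real (card {2..L}) \<le> 2 * ln (real n)" using L_le by linarith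
    qed simp
    finally show ?thesis .
  qed
  also have "(\<Sum>i\<in>I2. p ^ card (snd (snd i))) \<le> (2 * real K * ln (real n) + 1) / real n"
  proof -
    have "(\<Sum>i\<in>I2. p ^ card (snd (snd i))) = (\<Sum>k\<in>{L..K*L}. \<Sum>W\<in>W2 k. \<Sum>F\<in>FF W k. p ^ card F)"
      unfolding I2_def by (rule sum_SS) (auto simp: finW2 finFF W2_def)
    also have "\<dots> \<le> (\<Sum>k\<in>{L..K*L}. 1 / real n)"
    proof (rule sum_mono)
      fix k assume k: "k \<in> {L..K*L}"
      have k3: "k \<ge> 3" using k Lr r4 by simp
      have k2: "k \<ge> 2" using k3 by simp
      have inner: "(\<Sum>F\<in>FF W k. p ^ card F) = real ((k choose 2) choose mm k) * p ^ mm k" if "W \<in> W2 k" for W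
      proof -
        have fW: "finite W" using that finite_subset by (auto simp: W2_def)
        have "(\<Sum>F\<in>FF W k. p ^ card F) = (\<Sum>F\<in>FF W k. p ^ mm k)" by (rule sum.cong) (auto simp: FF_def)
        also have "\<dots> = real (card (FF W k)) * p ^ mm k" by simp
        also have "card (FF W k) = (k choose 2) choose mm k"
          unfolding FF_def by (rule card_FF[OF fW]) (use that in \<open>simp add: W2_def\<close>)
        finally show ?thesis .
      qed
      have cW2: "card (W2 k) = n choose k" using n_subsets[of "{0..<n}" k] by (simp add: W2_def)
      have "(\<Sum>W\<in>W2 k. \<Sum>F\<in>FF W k. p ^ card F) = real (n choose k) * real ((k choose 2) choose mm k) * p ^ mm k"
        using inner cW2 by (simp add: mult.assoc)
      also have "\<dots> \<le> 1 / real n"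
      proof (rule large_term[OF lam1 _ k3 mm1(1)[OF k2] mm1(2)[OF k2] _ p0 hp' d0 _ _ _ _ small[unfolded \<Lambda>_def[symmetric] K_def[symmetric]]])
        show "real n \<ge> 2" using nR by simp
        show "mm k \<le> \<Lambda> * k"
        proof -
          have "real (mm k) \<le> lam * (real k - 2) + 2" using mm1(3)[OF k2] .
          also have "\<dots> \<le> lam * real k" using lam1 by (simp add: algebra_simps)
          also have "\<dots> \<le> real \<Lambda> * real k" using lamL by (intro mult_right_mono) auto
          finally show ?thesis by (metis of_nat_le_iff of_nat_mult)
        qed
        show "exp 1 * real k * \<delta> \<le> real K"
        proof -
          have "real k \<le> real K * real L" using k by (metis atLeastAtMost_iff of_nat_le_iff of_nat_mult)
          also have "\<dots> \<le> real K * (2 * ln (real n))" using L_le by (intro mult_left_mono) auto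
          finally have "real k \<le> real K * (2 * ln (real n))" .
          then have "exp 1 * real k * \<delta> \<le> exp 1 * (real K * (2 * ln (real n))) * \<delta>"
            using d0 by (intro mult_right_mono mult_left_mono) auto
          also have "\<dots> = real K" using ln4 by (simp add: \<delta>_def)
          finally show ?thesis .
        qed
        show "real K \<ge> 1" by (simp add: K_def)
        show "ln (real n) \<le> real k" using k L_ge by simp
        show "ln (real n) > 0" using ln4 by simp
      qed
      finally show "(\<Sum>W\<in>W2 k. \<Sum>F\<in>FF W k. p ^ card F) \<le> 1 / real n" .
    qed
    also have "\<dots> = real (card {L..K*L}) / real n" by simp
    also have "\<dots> \<le> (2 * real K * ln (real n) + 1) / real n"
    proof (rule divide_right_mono)
      have "card {L..K*L} \<le> K * L + 1" by simp
      then have "real (card {L..K*L}) \<le> real K * real L + 1" by (metis of_nat_1 of_nat_add of_nat_le_iff of_nat_mult)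
      also have "\<dots> \<le> real K * (2 * ln (real n)) + 1" using L_le by (simp add: mult_left_mono)
      finally show "real (card {L..K*L}) \<le> 2 * real K * ln (real n) + 1" by simp
    qed simp
    finally show ?thesis .
  qed
  finally show ?thesis by (simp add: lam_def K_def \<Lambda>_def)
qed




lemma npowr_lim: assumes "s > 0" shows "(\<lambda>n. real n powr (- s)) \<longlonglongrightarrow> 0"
  by (rule tendsto_neg_powr[OF _ filterlim_real_sequentially]) (use assms in simp)

lemma lnpow0:
  assumes s: "s > 0"
  shows "(\<lambda>n. ln (real n) * real n powr (- s)) \<longlonglongrightarrow> 0"
proof (rule tendsto_sandwich[of "\<lambda>_. 0" _ _ "\<lambda>n. (2 / s) * real n powr (- (s / 2))"])
  show "\<forall>\<^sub>F n in sequentially. 0 \<le> ln (real n) * real n powr (- s)"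
    using eventually_ge_at_top[of "1::nat"] by eventually_elim simp
  show "\<forall>\<^sub>F n in sequentially. ln (real n) * real n powr (- s) \<le> (2 / s) * real n powr (- (s / 2))"
    using eventually_ge_at_top[of "1::nat"]
  proof eventually_elim
    case (elim n)
    have n1: "real n \<ge> 1" using elim by simp
    have "ln (real n) \<le> real n powr (s / 2) / (s / 2)" by (rule ln_powr_bound[OF n1]) (use s in simp)
    then have "ln (real n) * real n powr (- s) \<le> (real n powr (s / 2) / (s / 2)) * real n powr (- s)"
      by (rule mult_right_mono) simp
    also have "\<dots> = (2 / s) * (real n powr (s / 2) * real n powr (- s))" by (simp add: field_simps)
    also have "real n powr (s / 2) * real n powr (- s) = real n powr (- (s / 2))"
      by (simp add: powr_add[symmetric])
    finally show ?case .
  qed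
  show "(\<lambda>_. 0::real) \<longlonglongrightarrow> 0" by simp
  show "(\<lambda>n. (2 / s) * real n powr (- (s / 2))) \<longlonglongrightarrow> 0"
    using tendsto_mult_left[OF npowr_lim[of "s / 2"], of "2 / s"] s by simp
qed

theorem proposition3p1:
  fixes r :: nat and p :: "nat \<Rightarrow> real" and u v :: "nat \<Rightarrow> nat"
  assumes "r \<ge> 4"
    and "\<forall>n\<ge>2. u n < n \<and> v n < n \<and> u n \<noteq> v n"
    and "\<forall>n. 0 \<le> p n \<and> p n \<le> 1"
    and "\<forall>n. p n * real n powr (1 / lambda_r r) * ln (real n) \<le> 1 / (2 * exp 1)"
  shows "(\<lambda>n. Gnp_prob n (p n) (\<lambda>G. {u n, v n} \<in> bootstrap_closure r n G)) \<longlonglongrightarrow> 0"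
proof -
  note r4 = assms(1)
  define lam where "lam = lambda_r r"
  define K :: real where "K = real ((r choose 2) + 1)"
  define B where "B = max (real r) (exp 1 * K ^ (r choose 2) / exp (-3))"
  define N0 where "N0 = max 3 (nat \<lceil>exp B\<rceil>)"
  define f where "f n = 2 * (ln (real n) * real n powr (- (1 / lam))) + 2 * K * (ln (real n) * real n powr (- 1)) + real n powr (- 1)" for n :: nat
  have lam1: "lam \<ge> 1" using lam_ge1[OF r4] by (simp add: lam_def)
  have flim: "f \<longlonglongrightarrow> 0"
  proof -
    have a: "(\<lambda>n. 2 * (ln (real n) * real n powr (- (1 / lam)))) \<longlonglongrightarrow> 0"
      using tendsto_mult_left[OF lnpow0[of "1 / lam"], of 2] lam1 by simp
    have b: "(\<lambda>n. 2 * K * (ln (real n) * real n powr (- 1))) \<longlonglongrightarrow> 0"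
      using tendsto_mult_left[OF lnpow0[of 1], of "2 * K"] by simp
    have c: "(\<lambda>n. real n powr (- 1)) \<longlonglongrightarrow> 0" using npowr_lim[of 1] by simp
    show ?thesis unfolding f_def using tendsto_add[OF tendsto_add[OF a b] c] by simp
  qed
  show ?thesis
  proof (rule tendsto_sandwich[OF _ _ tendsto_const flim])
    show "\<forall>\<^sub>F n in sequentially. 0 \<le> Gnp_prob n (p n) (\<lambda>G. {u n, v n} \<in> bootstrap_closure r n G)"
    proof (rule always_eventually, rule allI)
      fix n
      show "0 \<le> Gnp_prob n (p n) (\<lambda>G. {u n, v n} \<in> bootstrap_closure r n G)"
        unfolding Gnp_prob_def using assms(3) by (intro sum_nonneg mult_nonneg_nonneg zero_le_power) auto
    qed
    show "\<forall>\<^sub>F n in sequentially. Gnp_prob n (p n) (\<lambda>G. {u n, v n} \<in> bootstrap_closure r n G) \<le> f n"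
      using eventually_ge_at_top[of N0]
    proof eventually_elim
      case (elim n)
      have n3: "n \<ge> 3" using elim by (simp add: N0_def)
      have "real n \<ge> exp B"
      proof -
        have "exp B \<le> real (nat \<lceil>exp B\<rceil>)" using nat_ceil_facts(1)[of "exp B"] by simp
        also have "\<dots> \<le> real n"
        proof -
          have "nat \<lceil>exp B\<rceil> \<le> n" using elim unfolding N0_def by (meson max.bounded_iff)
          then show ?thesis by (simp only: of_nat_le_iff)
        qed
        finally show ?thesis .
      qed
      then have "ln (exp B) \<le> ln (real n)" by (subst ln_le_cancel_iff) (use n3 in auto)
      then have lnB: "ln (real n) \<ge> B" by simp
      have lnr: "ln (real n) \<ge> real r" using lnB by (simp add: B_def)
      have lnpos: "ln (real n) > 0" using lnr r4 by linarith
      have small: "exp 1 * real ((r choose 2) + 1) ^ (r choose 2) / ln (real n) \<le> exp (-3)"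
      proof -
        have "exp 1 * K ^ (r choose 2) / exp (-3) \<le> ln (real n)" using lnB by (simp add: B_def)
        then have "exp 1 * K ^ (r choose 2) \<le> exp (-3) * ln (real n)" by (simp add: pos_divide_le_eq mult.commute)
        then show ?thesis using lnpos by (simp add: pos_divide_le_eq K_def mult.commute)
      qed
      have uv: "u n < n" "v n < n" "u n \<noteq> v n" using assms(2) n3 by auto
      have "Gnp_prob n (p n) (\<lambda>G. {u n, v n} \<in> bootstrap_closure r n G)
          \<le> 2 * ln (real n) * real n powr (-1 / lambda_r r) + (2 * real ((r choose 2) + 1) * ln (real n) + 1) / real n"
        by (rule bound_n[OF r4 n3 lnr small uv]) (use assms(3,4) in auto)
      also have "\<dots> = f n"
      proof -
        have npos: "real n > 0" using n3 by simp
        have "(2 * K * ln (real n) + 1) / real n = 2 * K * (ln (real n) * real n powr (- 1)) + real n powr (- 1)"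
          using npos by (simp add: powr_minus divide_inverse algebra_simps)
        moreover have "-1 / lambda_r r = - (1 / lam)" by (simp add: lam_def)
        ultimately show ?thesis by (simp add: f_def K_def mult.assoc)
      qed
      finally show ?case .
    qed
  qed
qed



end
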